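(* Let $A$ be a nonempty countable alphabet and $X\subseteq A^{\mathbb{N}}$ a shift space. The following are equivalent: (i) $X$ is a shift of finite order; (ii) $(X,d_\Pi,\sigma)$ has the shadowing property; (iii) $(X,d_\Pi,\sigma)$ has the finite shadowing property.
   Context: $A$ carries the discrete topology; $A^{\mathbb{N}}$ carries the product topology and the metric $d_\Pi(x,y)=1/(i+1)$ where $i$ is the least index with $x_i\ne y_i$ ($d_\Pi(x,x)=0$). The shift map is $\sigma((x_i)_i)=(x_{i+1})_i$. A shift space is a closed $X\subseteq A^{\mathbb{N}}$ with $\sigma(X)\subseteq X$. For a set $F$ of finite words over $A$, $X_F$ is the set of sequences in $A^{\mathbb{N}}$ containing no word of $F$ as a block of consecutive entries. $X$ has order $p$ ($p\in\mathbb{N}$) if $X=X_F$ for some set $F$ of words all of length $p$; $X$ is of finite order if it has order $p$ for some $p$. For a map $f$ on a metric space, a $\delta$-pseudo-orbit is a (finite or infinite) sequence $(x_n)$ with $d(f(x_n),x_{n+1})<\delta$ for consecutive indices; $x$ $\varepsilon$-shadows it if $d(f^n(x),x_n)<\varepsilon$ for all indices. Finite shadowing property: for every $\varepsilon>0$ there is $\delta>0$ such that every finite $\delta$-pseudo-orbit is $\varepsilon$-shadowed by some point; shadowing property: the same for infinite pseudo-orbits. *)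

theory Defs
  imports "HOL-Analysis.Analysis"
begin

definition full_shift :: "'a set \<Rightarrow> (nat \<Rightarrow> 'a) set" where
  "full_shift A = {x. \<forall>i. x i \<in> A}"

definition prod_top :: "'a set \<Rightarrow> (nat \<Rightarrow> 'a) topology" where
  "prod_top A = product_topology (\<lambda>_. discrete_topology A) UNIV"

definition shift_map :: "(nat \<Rightarrow> 'a) \<Rightarrow> (nat \<Rightarrow> 'a)" where
  "shift_map x = (\<lambda>i. x (Suc i))"

definition dPi :: "(nat \<Rightarrow> 'a) \<Rightarrow> (nat \<Rightarrow> 'a) \<Rightarrow> real" where
  "dPi x y = (if x = y then 0 else 1 / real (Suc (LEAST i. x i \<noteq> y i)))"

definition is_shift_space :: "'a set \<Rightarrow> (nat \<Rightarrow> 'a) set \<Rightarrow> bool" where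
  "is_shift_space A X \<longleftrightarrow> X \<subseteq> full_shift A \<and> closedin (prod_top A) X \<and> shift_map ` X \<subseteq> X"

definition occurs_in :: "'a list \<Rightarrow> (nat \<Rightarrow> 'a) \<Rightarrow> bool" where
  "occurs_in w x \<longleftrightarrow> (\<exists>i. \<forall>j<length w. x (i + j) = w ! j)"

definition X_F :: "'a set \<Rightarrow> 'a list set \<Rightarrow> (nat \<Rightarrow> 'a) set" where
  "X_F A F = {x \<in> full_shift A. \<forall>w\<in>F. \<not> occurs_in w x}"

definition has_order :: "'a set \<Rightarrow> (nat \<Rightarrow> 'a) set \<Rightarrow> nat \<Rightarrow> bool" where
  "has_order A X p \<longleftrightarrow> (\<exists>F. (\<forall>w\<in>F. length w = p) \<and> X = X_F A F)"

definition finite_order :: "'a set \<Rightarrow> (nat \<Rightarrow> 'a) set \<Rightarrow> bool" where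
  "finite_order A X \<longleftrightarrow> (\<exists>p. has_order A X p)"

definition shadowing :: "'b set \<Rightarrow> ('b \<Rightarrow> 'b \<Rightarrow> real) \<Rightarrow> ('b \<Rightarrow> 'b) \<Rightarrow> bool" where
  "shadowing S d f \<longleftrightarrow> (\<forall>\<epsilon>>0. \<exists>\<delta>>0. \<forall>xs :: nat \<Rightarrow> 'b.
     ((\<forall>n. xs n \<in> S) \<and> (\<forall>n. d (f (xs n)) (xs (Suc n)) < \<delta>)) \<longrightarrow>
     (\<exists>x\<in>S. \<forall>n. d ((f ^^ n) x) (xs n) < \<epsilon>))"

definition finite_shadowing :: "'b set \<Rightarrow> ('b \<Rightarrow> 'b \<Rightarrow> real) \<Rightarrow> ('b \<Rightarrow> 'b) \<Rightarrow> bool" where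
  "finite_shadowing S d f \<longleftrightarrow> (\<forall>\<epsilon>>0. \<exists>\<delta>>0. \<forall>(N::nat) (xs :: nat \<Rightarrow> 'b).
     ((\<forall>n\<le>N. xs n \<in> S) \<and> (\<forall>n<N. d (f (xs n)) (xs (Suc n)) < \<delta>)) \<longrightarrow>
     (\<exists>x\<in>S. \<forall>n\<le>N. d ((f ^^ n) x) (xs n) < \<epsilon>))"

end

theory Submission
  imports Defs
begin

lemma dPi_lt_iff:
  "dPi x y < 1 / real (Suc K) \<longleftrightarrow> (\<forall>i\<le>K. x i = y i)"
proof (cases "x = y")
  case True then show ?thesis by (simp add: dPi_def)
next
  case False
  then obtain i0 where i0: "x i0 \<noteq> y i0" by auto
  define L where "L = (LEAST i. x i \<noteq> y i)"
  have L1: "x L \<noteq> y L" unfolding L_def by (rule LeastI[of _ i0], rule i0)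
  have L2: "\<And>i. i < L \<Longrightarrow> x i = y i" unfolding L_def using not_less_Least by blast
  have "dPi x y = 1 / real (Suc L)" using False by (simp add: dPi_def L_def)
  have p1: "0 < real (Suc L)" and p2: "0 < real (Suc K)" by simp_all
  have "1 / real (Suc L) < 1 / real (Suc K) \<longleftrightarrow> real (Suc K) < real (Suc L)"
    by (simp only: divide_inverse mult_1_left inverse_less_iff_less[OF p1 p2])
  then have "dPi x y < 1 / real (Suc K) \<longleftrightarrow> K < L"
    using \<open>dPi x y = 1 / real (Suc L)\<close> by (simp only:) simp
  also have "\<dots> \<longleftrightarrow> (\<forall>i\<le>K. x i = y i)"
    using L1 L2 by (meson leI le_trans order.strict_trans1)
  finally show ?thesis .
qed

lemma small_K: assumes "(e::real) > 0" obtains K where "1 / real (Suc K) \<le> e"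
proof -
  obtain n where "inverse (real (Suc n)) < e" using reals_Archimedean assms by blast
  then show ?thesis using that[of n] by (simp add: field_simps)
qed

lemma funpow_shift: "(shift_map ^^ n) z = (\<lambda>i. z (n + i))"
  by (induction n arbitrary: z) (auto simp: shift_map_def funpow_Suc_right)

lemma funpow_shift_in:
  assumes "shift_map ` X \<subseteq> X" "z \<in> X" shows "(shift_map ^^ n) z \<in> X"
  using assms by (induction n) auto

lemma closed_lemma:
  assumes "closedin (prod_top A) X" "y \<in> full_shift A" "X \<subseteq> full_shift A"
    and "\<And>M. \<exists>z\<in>X. \<forall>i\<le>M. z i = y i"
  shows "y \<in> X"
proof (rule ccontr)
  assume ny: "y \<notin> X"
  have ts: "topspace (prod_top A) = full_shift A"
    by (auto simp: prod_top_def full_shift_def PiE_def extensional_def)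
  have "openin (prod_top A) (topspace (prod_top A) - X)"
    using assms(1) by (simp add: closedin_def)
  then have "openin (product_topology (\<lambda>_. discrete_topology A) UNIV) (full_shift A - X)"
    using ts by (simp add: prod_top_def)
  then have "\<forall>x \<in> full_shift A - X. \<exists>U. finite {i \<in> UNIV. U i \<noteq> topspace (discrete_topology A)} \<and>
       (\<forall>i \<in> UNIV. openin (discrete_topology A) (U i)) \<and> x \<in> Pi\<^sub>E UNIV U \<and> Pi\<^sub>E UNIV U \<subseteq> full_shift A - X"
    by (simp only: openin_product_topology_alt)
  moreover have "y \<in> full_shift A - X" using ny assms(2) by blast
  ultimately obtain U where U: "finite {i \<in> UNIV. U i \<noteq> topspace (discrete_topology A)}" "y \<in> Pi\<^sub>E UNIV U"
      "Pi\<^sub>E UNIV U \<subseteq> full_shift A - X"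
    by blast
  have U1: "finite {i. U i \<noteq> A}" using U(1) by (simp only: topspace_discrete_topology UNIV_I simp_thms)
  obtain M where M: "\<And>i. i \<in> {i. U i \<noteq> A} \<Longrightarrow> i \<le> M"
    using U1[unfolded finite_nat_set_iff_bounded_le] by blast
  obtain z where z: "z \<in> X" "\<forall>i\<le>M. z i = y i" using assms(4) by blast
  have "z \<in> Pi\<^sub>E UNIV U"
  proof -
    have "z i \<in> U i" for i
    proof (cases "U i = A")
      case True then show ?thesis using z(1) assms(3) by (auto simp: full_shift_def)
    next
      case False then have "i \<le> M" using M by auto
      then show ?thesis using z U(2) by auto
    qed
    then show ?thesis by auto
  qed
  then show False using U(3) z(1) by auto
qed

lemma fo_sh:
  assumes "is_shift_space A X" "finite_order A X"
  shows "shadowing X dPi shift_map"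
  unfolding shadowing_def
proof (intro allI impI)
  fix e :: real assume "e > 0"
  then obtain K where K: "1 / real (Suc K) \<le> e" using small_K by blast
  obtain p F where F: "\<forall>w\<in>F. length w = p" "X = X_F A F"
    using assms(2) unfolding finite_order_def has_order_def by blast
  define M where "M = max K p"
  show "\<exists>\<delta>>0. \<forall>xs. (\<forall>n. xs n \<in> X) \<and> (\<forall>n. dPi (shift_map (xs n)) (xs (Suc n)) < \<delta>) \<longrightarrow>
          (\<exists>x\<in>X. \<forall>n. dPi ((shift_map ^^ n) x) (xs n) < e)"
  proof (intro exI[of _ "1 / real (Suc M)"] conjI allI impI)
    show "0 < 1 / real (Suc M)" by simp
    fix xs assume H: "(\<forall>n. xs n \<in> X) \<and> (\<forall>n. dPi (shift_map (xs n)) (xs (Suc n)) < 1 / real (Suc M))"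
    have ag: "xs n (Suc i) = xs (Suc n) i" if "i \<le> M" for n i
    proof -
      have "\<forall>i\<le>M. shift_map (xs n) i = xs (Suc n) i" using H dPi_lt_iff by blast
      then show ?thesis using that by (simp add: shift_map_def)
    qed
    define z where "z = (\<lambda>n. xs n 0)"
    have zj: "j \<le> M \<Longrightarrow> z (n + j) = xs n j" for j n
    proof (induction j arbitrary: n)
      case 0 then show ?case by (simp add: z_def)
    next
      case (Suc j)
      have "z (n + Suc j) = z (Suc n + j)" by simp
      also have "\<dots> = xs (Suc n) j" using Suc.IH[of "Suc n"] Suc.prems by simp
      also have "\<dots> = xs n (Suc j)" using ag Suc by simp
      finally show ?case .
    qed
    have "z \<in> X"
    proof -
      have "xs n \<in> full_shift A" for n using H F(2) by (auto simp: X_F_def)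
      then have zA: "z \<in> full_shift A" by (auto simp: full_shift_def z_def)
      have "\<not> occurs_in w z" if w: "w \<in> F" for w
      proof
        assume "occurs_in w z"
        then obtain i where i: "\<forall>j<length w. z (i + j) = w ! j" by (auto simp: occurs_in_def)
        have "\<forall>j<length w. xs i (0 + j) = w ! j"
        proof (intro allI impI)
          fix j assume "j < length w"
          then have "j \<le> M" using F(1) w M_def by simp
          then show "xs i (0 + j) = w ! j" using zj[of j i] i \<open>j < length w\<close> by simp
        qed
        then have "occurs_in w (xs i)" unfolding occurs_in_def by blast
        moreover have "xs i \<in> X_F A F" using H F(2) by auto
        ultimately show False using w by (auto simp: X_F_def)
      qed
      then show ?thesis using zA F(2) by (auto simp: X_F_def)
    qed
    moreover have "dPi ((shift_map ^^ n) z) (xs n) < e" for n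
    proof -
      have "\<forall>i\<le>K. (shift_map ^^ n) z i = xs n i"
        using zj M_def by (simp add: funpow_shift)
      then have "dPi ((shift_map ^^ n) z) (xs n) < 1 / real (Suc K)" by (simp only: dPi_lt_iff)
      then show ?thesis using K by linarith
    qed
    ultimately show "\<exists>x\<in>X. \<forall>n. dPi ((shift_map ^^ n) x) (xs n) < e" by blast
  qed
qed

lemma sh_fsh:
  assumes "is_shift_space A X" "shadowing X dPi shift_map"
  shows "finite_shadowing X dPi shift_map"
  unfolding finite_shadowing_def
proof (intro allI impI)
  fix e :: real assume "e > 0"
  then obtain d where d: "d > 0" "\<forall>xs. (\<forall>n. xs n \<in> X) \<and> (\<forall>n. dPi (shift_map (xs n)) (xs (Suc n)) < d) \<longrightarrow>
          (\<exists>x\<in>X. \<forall>n. dPi ((shift_map ^^ n) x) (xs n) < e)"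
    using mp[OF spec[OF assms(2)[unfolded shadowing_def], of e] \<open>e > 0\<close>] by (elim exE conjE) (rule that)
  show "\<exists>\<delta>>0. \<forall>N xs. (\<forall>n\<le>N. xs n \<in> X) \<and> (\<forall>n<N. dPi (shift_map (xs n)) (xs (Suc n)) < \<delta>) \<longrightarrow>
          (\<exists>x\<in>X. \<forall>n\<le>N. dPi ((shift_map ^^ n) x) (xs n) < e)"
  proof (intro exI[of _ d] conjI allI impI)
    show "d > 0" by fact
    fix N xs assume H: "(\<forall>n\<le>N. xs n \<in> X) \<and> (\<forall>n<N. dPi (shift_map (xs n)) (xs (Suc n)) < d)"
    define ys where "ys n = (if n \<le> N then xs n else (shift_map ^^ (n - N)) (xs N))" for n
    have sX: "shift_map ` X \<subseteq> X" using assms(1) by (simp add: is_shift_space_def)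
    have "ys n \<in> X" for n
      using H funpow_shift_in[OF sX] by (auto simp: ys_def)
    moreover have "dPi (shift_map (ys n)) (ys (Suc n)) < d" for n
    proof (cases "n < N")
      case True then show ?thesis using H by (simp add: ys_def)
    next
      case False
      then have "ys (Suc n) = shift_map (ys n)"
        by (auto simp: ys_def Suc_diff_le intro: funpow_Suc_right) 
      then show ?thesis using d by (simp add: dPi_def)
    qed
    ultimately obtain x where x: "x \<in> X" "\<forall>n. dPi ((shift_map ^^ n) x) (ys n) < e"
      using d(2) by blast
    show "\<exists>x\<in>X. \<forall>n\<le>N. dPi ((shift_map ^^ n) x) (xs n) < e"
    proof (rule bexI[of _ x])
      show "\<forall>n\<le>N. dPi ((shift_map ^^ n) x) (xs n) < e"
      proof (intro allI impI)
        fix n assume "n \<le> N"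
        then show "dPi ((shift_map ^^ n) x) (xs n) < e" using x(2)[rule_format, of n] by (simp add: ys_def)
      qed
    qed (rule x(1))
  qed
qed

lemma fsh_fo:
  assumes "is_shift_space A X" "finite_shadowing X dPi shift_map"
  shows "finite_order A X"
proof -
  obtain d where d: "d > 0" "\<forall>N xs. (\<forall>n\<le>N. xs n \<in> X) \<and> (\<forall>n<N. dPi (shift_map (xs n)) (xs (Suc n)) < d) \<longrightarrow>
          (\<exists>x\<in>X. \<forall>n\<le>N. dPi ((shift_map ^^ n) x) (xs n) < 1)"
    using mp[OF spec[OF assms(2)[unfolded finite_shadowing_def], of 1] zero_less_one] by (elim exE conjE) (rule that)
  obtain K where K: "1 / real (Suc K) \<le> d" using small_K d(1) by blast
  define p where "p = Suc (Suc K)"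
  define F where "F = {w. length w = p \<and> \<not> (\<exists>x\<in>X. occurs_in w x)}"
  have sX: "shift_map ` X \<subseteq> X" and XA: "X \<subseteq> full_shift A" and cl: "closedin (prod_top A) X"
    using assms(1) by (auto simp: is_shift_space_def)
  have "X = X_F A F"
  proof
    show "X \<subseteq> X_F A F" using XA by (auto simp: X_F_def F_def)
  next
    show "X_F A F \<subseteq> X"
    proof
      fix y assume y: "y \<in> X_F A F"
      have "\<exists>x. x \<in> X \<and> (\<forall>j<p. x j = y (n + j))" for n
      proof -
        define w where "w = map (\<lambda>j. y (n + j)) [0..<p]"
        have "occurs_in w y" by (auto simp: occurs_in_def w_def)
        then have "w \<notin> F" using y by (auto simp: X_F_def)
        then obtain x i where x: "x \<in> X" "\<forall>j<p. x (i + j) = w ! j"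
          by (auto simp: F_def w_def occurs_in_def)
        show ?thesis
          using x funpow_shift_in[OF sX x(1), of i] by (auto simp: funpow_shift w_def)
      qed
      then have "\<forall>n. \<exists>x. x \<in> X \<and> (\<forall>j<p. x j = y (n + j))" by blast
      then have "\<exists>xs. \<forall>n. xs n \<in> X \<and> (\<forall>j<p. xs n j = y (n + j))" by (rule choice)
      then obtain xs where xs: "\<And>n. xs n \<in> X" "\<And>n j. j < p \<Longrightarrow> xs n j = y (n + j)"
        by blast
      have pse: "dPi (shift_map (xs n)) (xs (Suc n)) < d" for n
      proof -
        have "\<forall>i\<le>K. shift_map (xs n) i = xs (Suc n) i"
          using xs(2) by (simp add: shift_map_def p_def)
        then show ?thesis using K by (simp add: dPi_lt_iff[symmetric])
      qed
      have "\<exists>z\<in>X. \<forall>i\<le>M. z i = y i" for M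
      proof -
        obtain z where z: "z \<in> X" "\<forall>n\<le>M. dPi ((shift_map ^^ n) z) (xs n) < 1"
          using d(2) xs(1) pse by blast
        have "z n = y n" if "n \<le> M" for n
        proof -
          have "dPi ((shift_map ^^ n) z) (xs n) < 1 / real (Suc 0)" using z that by simp
          then have "\<forall>i\<le>0. (shift_map ^^ n) z i = xs n i" by (simp only: dPi_lt_iff)
          then have "(shift_map ^^ n) z 0 = xs n 0" by simp
          then show ?thesis using xs(2)[of 0 n] by (simp add: funpow_shift p_def)
        qed
        then show ?thesis using z(1) by blast
      qed
      moreover have "y \<in> full_shift A" using y by (simp add: X_F_def)
      ultimately show "y \<in> X" using closed_lemma[OF cl _ XA] by blast
    qed
  qed
  moreover have "\<forall>w\<in>F. length w = p" by (simp add: F_def)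
  ultimately have "has_order A X p" unfolding has_order_def by blast
  then show ?thesis unfolding finite_order_def by blast
qed

theorem proposition2p19:
  fixes A :: "'a set" and X :: "(nat \<Rightarrow> 'a) set"
  assumes "A \<noteq> {}" and "countable A" and "is_shift_space A X"
  shows "(finite_order A X \<longleftrightarrow> shadowing X dPi shift_map)
       \<and> (shadowing X dPi shift_map \<longleftrightarrow> finite_shadowing X dPi shift_map)"
  using fo_sh[OF assms(3)] sh_fsh[OF assms(3)] fsh_fo[OF assms(3)] by blast

end
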